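(* Let $\mathcal E$ be an eventual identity on an $F$-manifold $(M,\circ,e)$. Then for all integers $m,n\in\mathbb Z$, $$[\mathcal E^n,\mathcal E^m]=(m-n)\,\mathcal E^{m+n-1}\circ[e,\mathcal E].$$
   Context: An $F$-manifold $(M,\circ,e)$ is a smooth manifold $M$ together with a commutative, associative, $C^\infty(M)$-bilinear multiplication $\circ$ on $TM$ with unit vector field $e$, such that $$L_{X\circ Y}(\circ)=X\circ L_Y(\circ)+Y\circ L_X(\circ)$$ for all vector fields $X,Y$. Here $$L_Z(\circ)(X,Y):=[Z,X\circ Y]-[Z,X]\circ Y-X\circ[Z,Y].$$ A vector field $\mathcal E$ is invertible if there is a vector field $\mathcal E^{-1}$ with $\mathcal E\circ\mathcal E^{-1}=e$ everywhere on $M$. An eventual identity on $(M,\circ,e)$ is an invertible vector field $\mathcal E$ such that the multiplication $X*Y:=X\circ Y\circ\mathcal E^{-1}$ defines an $F$-manifold structure on $M$ (its unit is $\mathcal E$). Powers are taken with respect to $\circ$: $\mathcal E^0=e$, $\mathcal E^{n}=\mathcal E\circ\cdots\circ\mathcal E$ ($n$ factors) for $n>0$, and $\mathcal E^{-n}=(\mathcal E^{-1})^n$. *)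

theory Defs
  imports "HOL-Analysis.Analysis"
begin

primrec Ck :: "nat \<Rightarrow> (real^'n) set \<Rightarrow> (real^'n \<Rightarrow> real) set" where
  "Ck 0 S = {f. continuous_on S f}"
| "Ck (Suc k) S = {f. f differentiable_on S \<and>
      (\<forall>i. (\<lambda>x. frechet_derivative f (at x) (axis i 1)) \<in> Ck k S)}"

definition smooth_on :: "(real^'n) set \<Rightarrow> (real^'n \<Rightarrow> real) \<Rightarrow> bool" where
  "smooth_on S f \<longleftrightarrow> (\<forall>k. f \<in> Ck k S)"

definition smooth_map_on :: "(real^'n) set \<Rightarrow> (real^'n \<Rightarrow> real^'m) \<Rightarrow> bool" where
  "smooth_map_on S g \<longleftrightarrow> (\<forall>j. smooth_on S (\<lambda>x. g x $ j))"

definition smooth_atlas :: "('a::topological_space set \<times> ('a \<Rightarrow> real^'n)) set \<Rightarrow> bool" where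
  "smooth_atlas A \<longleftrightarrow>
     \<Union>(fst ` A) = UNIV \<and>
     (\<forall>(U,\<phi>)\<in>A. open U \<and> open (\<phi> ` U) \<and> inj_on \<phi> U \<and> continuous_on U \<phi> \<and>
                  continuous_on (\<phi> ` U) (inv_into U \<phi>)) \<and>
     (\<forall>(U,\<phi>)\<in>A. \<forall>(V,\<psi>)\<in>A. smooth_map_on (\<phi> ` (U \<inter> V)) (\<psi> \<circ> inv_into U \<phi>))"

definition Cinf :: "('a set \<times> ('a \<Rightarrow> real^'n)) set \<Rightarrow> ('a \<Rightarrow> real) set" where
  "Cinf A = {f. \<forall>(U,\<phi>)\<in>A. smooth_on (\<phi> ` U) (f \<circ> inv_into U \<phi>)}"

type_synonym 'a vf = "('a \<Rightarrow> real) \<Rightarrow> ('a \<Rightarrow> real)"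

text \<open>A vector field is a derivation of the algebra of smooth functions; as a canonical
  representative it sends non-smooth functions to 0.\<close>
definition vector_fields :: "('a set \<times> ('a \<Rightarrow> real^'n)) set \<Rightarrow> 'a vf set" where
  "vector_fields A = {X.
     (\<forall>f. f \<notin> Cinf A \<longrightarrow> X f = (\<lambda>_. 0)) \<and>
     (\<forall>f\<in>Cinf A. X f \<in> Cinf A) \<and>
     (\<forall>c. \<forall>f\<in>Cinf A. X (\<lambda>p. c * f p) = (\<lambda>p. c * X f p)) \<and>
     (\<forall>f\<in>Cinf A. \<forall>g\<in>Cinf A. X (\<lambda>p. f p + g p) = (\<lambda>p. X f p + X g p)) \<and>
     (\<forall>f\<in>Cinf A. \<forall>g\<in>Cinf A. X (\<lambda>p. f p * g p) = (\<lambda>p. f p * X g p + g p * X f p))}"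

definition vf_add :: "'a vf \<Rightarrow> 'a vf \<Rightarrow> 'a vf" where
  "vf_add X Y = (\<lambda>f p. X f p + Y f p)"

definition vf_diff :: "'a vf \<Rightarrow> 'a vf \<Rightarrow> 'a vf" where
  "vf_diff X Y = (\<lambda>f p. X f p - Y f p)"

definition vf_fscale :: "('a \<Rightarrow> real) \<Rightarrow> 'a vf \<Rightarrow> 'a vf" where
  "vf_fscale g X = (\<lambda>f p. g p * X f p)"

definition vf_rscale :: "real \<Rightarrow> 'a vf \<Rightarrow> 'a vf" where
  "vf_rscale c X = (\<lambda>f p. c * X f p)"

definition vf_bracket :: "'a vf \<Rightarrow> 'a vf \<Rightarrow> 'a vf" where
  "vf_bracket X Y = (\<lambda>f p. X (Y f) p - Y (X f) p)"

definition lie_mult :: "('a vf \<Rightarrow> 'a vf \<Rightarrow> 'a vf) \<Rightarrow> 'a vf \<Rightarrow> 'a vf \<Rightarrow> 'a vf \<Rightarrow> 'a vf" where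
  "lie_mult mul Z X Y =
     vf_diff (vf_diff (vf_bracket Z (mul X Y)) (mul (vf_bracket Z X) Y)) (mul X (vf_bracket Z Y))"

definition F_manifold ::
  "('a::topological_space set \<times> ('a \<Rightarrow> real^'n)) set \<Rightarrow> ('a vf \<Rightarrow> 'a vf \<Rightarrow> 'a vf) \<Rightarrow> 'a vf \<Rightarrow> bool" where
  "F_manifold A mul e \<longleftrightarrow>
     smooth_atlas A \<and>
     (\<forall>X\<in>vector_fields A. \<forall>Y\<in>vector_fields A. mul X Y \<in> vector_fields A) \<and>
     (\<forall>X\<in>vector_fields A. \<forall>Y\<in>vector_fields A. mul X Y = mul Y X) \<and>
     (\<forall>X\<in>vector_fields A. \<forall>Y\<in>vector_fields A. \<forall>Z\<in>vector_fields A.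
        mul (mul X Y) Z = mul X (mul Y Z)) \<and>
     (\<forall>X\<in>vector_fields A. \<forall>Y\<in>vector_fields A. \<forall>Z\<in>vector_fields A.
        mul (vf_add X Y) Z = vf_add (mul X Z) (mul Y Z)) \<and>
     (\<forall>g\<in>Cinf A. \<forall>X\<in>vector_fields A. \<forall>Y\<in>vector_fields A.
        mul (vf_fscale g X) Y = vf_fscale g (mul X Y)) \<and>
     e \<in> vector_fields A \<and>
     (\<forall>X\<in>vector_fields A. mul e X = X) \<and>
     (\<forall>X\<in>vector_fields A. \<forall>Y\<in>vector_fields A. \<forall>Z\<in>vector_fields A. \<forall>W\<in>vector_fields A.
        lie_mult mul (mul X Y) Z W =
          vf_add (mul X (lie_mult mul Y Z W)) (mul Y (lie_mult mul X Z W)))"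

definition vf_invertible ::
  "('a set \<times> ('a \<Rightarrow> real^'n)) set \<Rightarrow> ('a vf \<Rightarrow> 'a vf \<Rightarrow> 'a vf) \<Rightarrow> 'a vf \<Rightarrow> 'a vf \<Rightarrow> bool" where
  "vf_invertible A mul e E \<longleftrightarrow> E \<in> vector_fields A \<and> (\<exists>F\<in>vector_fields A. mul E F = e)"

definition vf_inverse ::
  "('a set \<times> ('a \<Rightarrow> real^'n)) set \<Rightarrow> ('a vf \<Rightarrow> 'a vf \<Rightarrow> 'a vf) \<Rightarrow> 'a vf \<Rightarrow> 'a vf \<Rightarrow> 'a vf" where
  "vf_inverse A mul e E = (SOME F. F \<in> vector_fields A \<and> mul E F = e)"

definition eventual_identity ::
  "('a::topological_space set \<times> ('a \<Rightarrow> real^'n)) set \<Rightarrow> ('a vf \<Rightarrow> 'a vf \<Rightarrow> 'a vf) \<Rightarrow> 'a vf \<Rightarrow> 'a vf \<Rightarrow> bool" where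
  "eventual_identity A mul e E \<longleftrightarrow>
     vf_invertible A mul e E \<and>
     F_manifold A (\<lambda>X Y. mul (mul X Y) (vf_inverse A mul e E)) E"

definition vf_ipow ::
  "('a set \<times> ('a \<Rightarrow> real^'n)) set \<Rightarrow> ('a vf \<Rightarrow> 'a vf \<Rightarrow> 'a vf) \<Rightarrow> 'a vf \<Rightarrow> 'a vf \<Rightarrow> int \<Rightarrow> 'a vf" where
  "vf_ipow A mul e E k =
     (if 0 \<le> k then (mul E ^^ nat k) e
      else (mul (vf_inverse A mul e E) ^^ nat (- k)) e)"

end

theory Submission
  imports Defs
begin


lemma Ck_cong:
  assumes "open S" shows "f \<in> Ck k S \<Longrightarrow> (\<And>x. x\<in>S \<Longrightarrow> g x = f x) \<Longrightarrow> g \<in> Ck k S"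
proof (induction k arbitrary: f g)
  case 0
  have "continuous_on S f" using 0 by simp
  hence "continuous_on S g" using continuous_on_cong[of S S g f] 0(2) by simp
  thus ?case by simp
next
  case (Suc k)
  have df: "\<forall>x\<in>S. f differentiable at x" using Suc.prems(1) assms
    by (simp add: differentiable_on_eq_differentiable_at)
  have hd: "(g has_derivative frechet_derivative f (at x)) (at x)" if x: "x\<in>S" for x
  proof (rule has_derivative_transform_within_open[OF _ assms x])
    show "(f has_derivative frechet_derivative f (at x)) (at x)" using df x frechet_derivative_works by blast
    show "\<And>y. y \<in> S \<Longrightarrow> f y = g y" using Suc.prems(2) by simp
  qed
  have "g differentiable_on S" unfolding differentiable_on_eq_differentiable_at[OF assms]
  proof
    fix x assume "x \<in> S" thus "g differentiable at x" using hd unfolding differentiable_def by blast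
  qed
  moreover have "\<And>x. x\<in>S \<Longrightarrow> frechet_derivative g (at x) = frechet_derivative f (at x)"
    using frechet_derivative_at[OF hd, symmetric] by simp
  moreover have "(\<lambda>x. frechet_derivative g (at x) (axis i 1)) \<in> Ck k S" for i
  proof (rule Suc.IH)
    show "(\<lambda>x. frechet_derivative f (at x) (axis i 1)) \<in> Ck k S" using Suc.prems(1) by simp
  qed (simp add: calculation(2))
  ultimately show ?case by simp
qed

lemma Ck_const: "(\<lambda>_. c) \<in> Ck k S"
proof (induction k arbitrary: c)
  case 0 then show ?case by simp
next
  case (Suc k)
  have "frechet_derivative (\<lambda>_. c) (at x) = (\<lambda>_. 0)" for x :: "real^'n"
    using frechet_derivative_at[OF has_derivative_const[of c "at x"]] by simp
  then show ?case using Suc by simp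
qed

lemma Ck_add:
  assumes "open S" shows "f \<in> Ck k S \<Longrightarrow> g \<in> Ck k S \<Longrightarrow> (\<lambda>x. f x + g x) \<in> Ck k S"
proof (induction k arbitrary: f g)
  case 0 thus ?case by (auto intro: continuous_on_add)
next
  case (Suc k)
  have df: "\<forall>x\<in>S. f differentiable at x" "\<forall>x\<in>S. g differentiable at x" using Suc.prems assms
    by (simp_all add: differentiable_on_eq_differentiable_at)
  have fd: "frechet_derivative (\<lambda>x. f x + g x) (at x) = (\<lambda>h. frechet_derivative f (at x) h + frechet_derivative g (at x) h)" if x: "x \<in> S" for x
  proof -
    have "(f has_derivative frechet_derivative f (at x)) (at x)" "(g has_derivative frechet_derivative g (at x)) (at x)"
      using df x frechet_derivative_works by blast+
    from has_derivative_add[OF this] show ?thesis by (rule frechet_derivative_at[symmetric])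
  qed
  have "(\<lambda>x. f x + g x) differentiable_on S" using Suc.prems by (auto intro: differentiable_on_add)
  moreover have "(\<lambda>x. frechet_derivative (\<lambda>x. f x + g x) (at x) (axis i 1)) \<in> Ck k S" for i
    apply (rule Ck_cong[OF assms, of "\<lambda>x. frechet_derivative f (at x) (axis i 1) + frechet_derivative g (at x) (axis i 1)"])
    using Suc.IH Suc.prems fd by auto
  ultimately show ?case by simp
qed

lemma Ck_cmult:
  assumes "open S" shows "f \<in> Ck k S \<Longrightarrow> (\<lambda>x. c * f x) \<in> Ck k S"
proof (induction k arbitrary: f)
  case 0 thus ?case by (auto intro: continuous_on_mult_left)
next
  case (Suc k)
  have df: "\<forall>x\<in>S. f differentiable at x" using Suc.prems assms
    by (simp_all add: differentiable_on_eq_differentiable_at)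
  have fd: "frechet_derivative (\<lambda>x. c * f x) (at x) = (\<lambda>h. c * frechet_derivative f (at x) h)" if x: "x \<in> S" for x
  proof -
    have "(f has_derivative frechet_derivative f (at x)) (at x)"
      using df x frechet_derivative_works by blast+
    from has_derivative_mult_right[OF this, of c] show ?thesis by (rule frechet_derivative_at[symmetric])
  qed
  have "(\<lambda>x. c * f x) differentiable_on S" using Suc.prems by (auto intro: differentiable_on_mult differentiable_on_const)
  moreover have "(\<lambda>x. frechet_derivative (\<lambda>x. c * f x) (at x) (axis i 1)) \<in> Ck k S" for i
    apply (rule Ck_cong[OF assms, of "\<lambda>x. c * frechet_derivative f (at x) (axis i 1)"])
    using Suc.IH Suc.prems fd by auto
  ultimately show ?case by simp
qed

lemma Cinf_const: "(\<lambda>_. c) \<in> Cinf A"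
  by (auto simp: Cinf_def smooth_on_def o_def Ck_const)

lemma Cinf_add: "smooth_atlas A \<Longrightarrow> f \<in> Cinf A \<Longrightarrow> g \<in> Cinf A \<Longrightarrow> (\<lambda>p. f p + g p) \<in> Cinf A"
  unfolding Cinf_def smooth_on_def smooth_atlas_def
  apply (clarsimp simp: o_def)
  apply (rule Ck_add) apply fastforce+ done

lemma Cinf_cmult: "smooth_atlas A \<Longrightarrow> f \<in> Cinf A \<Longrightarrow> (\<lambda>p. c * f p) \<in> Cinf A"
  unfolding Cinf_def smooth_on_def smooth_atlas_def
  apply (clarsimp simp: o_def)
  apply (rule Ck_cmult) apply fastforce+ done


lemma Ck_mono: "f \<in> Ck (Suc k) S \<Longrightarrow> f \<in> Ck k S"
proof (induction k arbitrary: f)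
  case 0
  hence "f differentiable_on S" by simp
  hence "continuous_on S f" by (rule differentiable_imp_continuous_on)
  thus ?case by simp
next
  case (Suc k)
  have fd: "f differentiable_on S" and d: "\<And>i. (\<lambda>x. frechet_derivative f (at x) (axis i 1)) \<in> Ck (Suc k) S"
    using Suc.prems by simp_all
  have "(\<lambda>x. frechet_derivative f (at x) (axis i 1)) \<in> Ck k S" for i using Suc.IH[OF d[of i]] .
  thus ?case using fd by simp
qed

lemma Ck_mult:
  assumes "open S" shows "f \<in> Ck k S \<Longrightarrow> g \<in> Ck k S \<Longrightarrow> (\<lambda>x. f x * g x) \<in> Ck k S"
proof (induction k arbitrary: f g)
  case 0
  hence "continuous_on S f" "continuous_on S g" by simp_all
  thus ?case using continuous_on_mult by simp
next
  case (Suc k)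
  have df: "\<forall>x\<in>S. f differentiable at x" "\<forall>x\<in>S. g differentiable at x" using Suc.prems assms
    by (simp_all add: differentiable_on_eq_differentiable_at)
  have fd: "frechet_derivative (\<lambda>x. f x * g x) (at x) = (\<lambda>h. f x * frechet_derivative g (at x) h + frechet_derivative f (at x) h * g x)" if x: "x \<in> S" for x
  proof -
    have "(f has_derivative frechet_derivative f (at x)) (at x)" "(g has_derivative frechet_derivative g (at x)) (at x)"
      using df x frechet_derivative_works by blast+
    from has_derivative_mult[OF this] show ?thesis by (rule frechet_derivative_at[symmetric])
  qed
  have "f differentiable_on S" "g differentiable_on S" using Suc.prems by simp_all
  hence "(\<lambda>x. f x * g x) differentiable_on S" by (rule differentiable_on_mult)
  moreover have "(\<lambda>x. frechet_derivative (\<lambda>x. f x * g x) (at x) (axis i 1)) \<in> Ck k S" for i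
  proof (rule Ck_cong[OF assms, of "\<lambda>x. f x * frechet_derivative g (at x) (axis i 1) + frechet_derivative f (at x) (axis i 1) * g x"])
    have f: "f \<in> Ck k S" "g \<in> Ck k S" using Ck_mono[OF Suc.prems(1)] Ck_mono[OF Suc.prems(2)] by simp_all
    have d: "(\<lambda>x. frechet_derivative f (at x) (axis i 1)) \<in> Ck k S" "(\<lambda>x. frechet_derivative g (at x) (axis i 1)) \<in> Ck k S"
      using Suc.prems by simp_all
    show "(\<lambda>x. f x * frechet_derivative g (at x) (axis i 1) + frechet_derivative f (at x) (axis i 1) * g x) \<in> Ck k S"
      by (rule Ck_add[OF assms Suc.IH[OF f(1) d(2)] Suc.IH[OF d(1) f(2)]])
  next
    fix x assume x: "x \<in> S"
    show "frechet_derivative (\<lambda>x. f x * g x) (at x) (axis i 1) = f x * frechet_derivative g (at x) (axis i 1) + frechet_derivative f (at x) (axis i 1) * g x"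
      unfolding fd[OF x] ..
  qed
  ultimately show ?case by simp
qed

lemma Cinf_mult: "smooth_atlas A \<Longrightarrow> f \<in> Cinf A \<Longrightarrow> g \<in> Cinf A \<Longrightarrow> (\<lambda>p. f p * g p) \<in> Cinf A"
  unfolding Cinf_def smooth_on_def smooth_atlas_def
  apply (clarsimp simp: o_def)
  apply (rule Ck_mult) apply fastforce+ done

lemma Cinf_diff: "smooth_atlas A \<Longrightarrow> f \<in> Cinf A \<Longrightarrow> g \<in> Cinf A \<Longrightarrow> (\<lambda>p. f p - g p) \<in> Cinf A"
  using Cinf_add[of A f "\<lambda>p. (-1) * g p"] Cinf_cmult[of A g "-1"] by simp



lemma vfI:
  assumes "\<And>f. f \<notin> Cinf A \<Longrightarrow> X f = (\<lambda>_. 0)"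
    and "\<And>f. f\<in>Cinf A \<Longrightarrow> X f \<in> Cinf A"
    and "\<And>c f. f\<in>Cinf A \<Longrightarrow> X (\<lambda>p. c * f p) = (\<lambda>p. c * X f p)"
    and "\<And>f g. f\<in>Cinf A \<Longrightarrow> g\<in>Cinf A \<Longrightarrow> X (\<lambda>p. f p + g p) = (\<lambda>p. X f p + X g p)"
    and "\<And>f g. f\<in>Cinf A \<Longrightarrow> g\<in>Cinf A \<Longrightarrow> X (\<lambda>p. f p * g p) = (\<lambda>p. f p * X g p + g p * X f p)"
  shows "X \<in> vector_fields A"
  using assms unfolding vector_fields_def by blast

lemma vf_ns: "X \<in> vector_fields A \<Longrightarrow> f \<notin> Cinf A \<Longrightarrow> X f = (\<lambda>_. 0)"
  and vf_sm: "X \<in> vector_fields A \<Longrightarrow> f \<in> Cinf A \<Longrightarrow> X f \<in> Cinf A"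
  and vf_sc: "X \<in> vector_fields A \<Longrightarrow> f \<in> Cinf A \<Longrightarrow> X (\<lambda>p. c * f p) = (\<lambda>p. c * X f p)"
  and vf_pl: "X \<in> vector_fields A \<Longrightarrow> f \<in> Cinf A \<Longrightarrow> g \<in> Cinf A \<Longrightarrow> X (\<lambda>p. f p + g p) = (\<lambda>p. X f p + X g p)"
  and vf_lb: "X \<in> vector_fields A \<Longrightarrow> f \<in> Cinf A \<Longrightarrow> g \<in> Cinf A \<Longrightarrow> X (\<lambda>p. f p * g p) = (\<lambda>p. f p * X g p + g p * X f p)"
  unfolding vector_fields_def by blast+

lemma vf_zero: "X \<in> vector_fields A \<Longrightarrow> X (\<lambda>_. 0) = (\<lambda>_. 0)"
  using vf_sc[of X A "\<lambda>_. 0" 0] Cinf_const[of 0 A] by simp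

lemma V_add: assumes SA: "smooth_atlas A" and X: "X \<in> vector_fields A" and Y: "Y \<in> vector_fields A"
  shows "vf_add X Y \<in> vector_fields A"
proof (rule vfI)
  fix f assume f: "f \<notin> Cinf A" thus "vf_add X Y f = (\<lambda>_. 0)" using vf_ns[OF X f] vf_ns[OF Y f] by (simp add: vf_add_def)
next
  fix f assume f: "f \<in> Cinf A" thus "vf_add X Y f \<in> Cinf A" using Cinf_add[OF SA vf_sm[OF X f] vf_sm[OF Y f]] by (simp add: vf_add_def)
next
  fix c f assume f: "f \<in> Cinf A" thus "vf_add X Y (\<lambda>p. c * f p) = (\<lambda>p. c * vf_add X Y f p)"
    using vf_sc[OF X f, of c] vf_sc[OF Y f, of c] by (simp add: vf_add_def distrib_left)
next
  fix f g assume f: "f \<in> Cinf A" and g: "g \<in> Cinf A" thus "vf_add X Y (\<lambda>p. f p + g p) = (\<lambda>p. vf_add X Y f p + vf_add X Y g p)"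
    using vf_pl[OF X f g] vf_pl[OF Y f g] by (simp add: vf_add_def add_ac)
next
  fix f g assume f: "f \<in> Cinf A" and g: "g \<in> Cinf A" thus "vf_add X Y (\<lambda>p. f p * g p) = (\<lambda>p. f p * vf_add X Y g p + g p * vf_add X Y f p)"
    using vf_lb[OF X f g] vf_lb[OF Y f g] by (simp add: vf_add_def fun_eq_iff algebra_simps)
qed

lemma V_rscale: assumes SA: "smooth_atlas A" and X: "X \<in> vector_fields A"
  shows "vf_rscale c X \<in> vector_fields A"
proof (rule vfI)
  fix f assume f: "f \<notin> Cinf A" thus "vf_rscale c X f = (\<lambda>_. 0)" using vf_ns[OF X f] by (simp add: vf_rscale_def)
next
  fix f assume f: "f \<in> Cinf A" thus "vf_rscale c X f \<in> Cinf A" using Cinf_cmult[OF SA vf_sm[OF X f]] by (simp add: vf_rscale_def)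
next
  fix d f assume f: "f \<in> Cinf A" thus "vf_rscale c X (\<lambda>p. d * f p) = (\<lambda>p. d * vf_rscale c X f p)"
    using vf_sc[OF X f, of d] by (simp add: vf_rscale_def mult.left_commute)
next
  fix f g assume f: "f \<in> Cinf A" and g: "g \<in> Cinf A" thus "vf_rscale c X (\<lambda>p. f p + g p) = (\<lambda>p. vf_rscale c X f p + vf_rscale c X g p)"
    using vf_pl[OF X f g] by (simp add: vf_rscale_def distrib_left)
next
  fix f g assume f: "f \<in> Cinf A" and g: "g \<in> Cinf A" thus "vf_rscale c X (\<lambda>p. f p * g p) = (\<lambda>p. f p * vf_rscale c X g p + g p * vf_rscale c X f p)"
    using vf_lb[OF X f g] by (simp add: vf_rscale_def distrib_left mult.left_commute)
qed

lemma diff_as_add: "vf_diff X Y = vf_add X (vf_rscale (-1) Y)"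
  by (simp add: vf_diff_def vf_add_def vf_rscale_def)

lemma V_diff: "smooth_atlas A \<Longrightarrow> X \<in> vector_fields A \<Longrightarrow> Y \<in> vector_fields A \<Longrightarrow> vf_diff X Y \<in> vector_fields A"
  by (simp add: diff_as_add V_add V_rscale)

lemma V_bracket: assumes SA: "smooth_atlas A" and X: "X \<in> vector_fields A" and Y: "Y \<in> vector_fields A"
  shows "vf_bracket X Y \<in> vector_fields A"
proof (rule vfI)
  fix f assume f: "f \<notin> Cinf A" thus "vf_bracket X Y f = (\<lambda>_. 0)" using vf_ns[OF X f] vf_ns[OF Y f] vf_zero[OF X] vf_zero[OF Y] by (simp add: vf_bracket_def)
next
  fix f assume f: "f \<in> Cinf A" thus "vf_bracket X Y f \<in> Cinf A" using Cinf_diff[OF SA vf_sm[OF X vf_sm[OF Y f]] vf_sm[OF Y vf_sm[OF X f]]] by (simp add: vf_bracket_def)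
next
  fix d f assume f: "f \<in> Cinf A" thus "vf_bracket X Y (\<lambda>p. d * f p) = (\<lambda>p. d * vf_bracket X Y f p)"
    using vf_sc[OF X f, of d] vf_sc[OF Y f, of d] vf_sc[OF X vf_sm[OF Y f], of d] vf_sc[OF Y vf_sm[OF X f], of d] by (simp add: vf_bracket_def right_diff_distrib)
next
  fix f g assume f: "f \<in> Cinf A" and g: "g \<in> Cinf A" thus "vf_bracket X Y (\<lambda>p. f p + g p) = (\<lambda>p. vf_bracket X Y f p + vf_bracket X Y g p)"
    unfolding vf_bracket_def vf_pl[OF X f g] vf_pl[OF Y f g] vf_pl[OF X vf_sm[OF Y f] vf_sm[OF Y g]] vf_pl[OF Y vf_sm[OF X f] vf_sm[OF X g]] by (simp add: fun_eq_iff)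
next
  fix f g assume f: "f \<in> Cinf A" and g: "g \<in> Cinf A"
  have Yf: "Y f \<in> Cinf A" "Y g \<in> Cinf A" "X f \<in> Cinf A" "X g \<in> Cinf A" using X Y f g vf_sm by auto
  have 1: "X (Y (\<lambda>p. f p * g p)) = (\<lambda>p. (f p * X (Y g) p + Y g p * X f p) + (g p * X (Y f) p + Y f p * X g p))"
    using vf_lb[OF Y f g] vf_pl[OF X Cinf_mult[OF SA f Yf(2)] Cinf_mult[OF SA g Yf(1)]]
      vf_lb[OF X f Yf(2)] vf_lb[OF X g Yf(1)] by simp
  have 2: "Y (X (\<lambda>p. f p * g p)) = (\<lambda>p. (f p * Y (X g) p + X g p * Y f p) + (g p * Y (X f) p + X f p * Y g p))"
    using vf_lb[OF X f g] vf_pl[OF Y Cinf_mult[OF SA f Yf(4)] Cinf_mult[OF SA g Yf(3)]]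
      vf_lb[OF Y f Yf(4)] vf_lb[OF Y g Yf(3)] by simp
  show "vf_bracket X Y (\<lambda>p. f p * g p) = (\<lambda>p. f p * vf_bracket X Y g p + g p * vf_bracket X Y f p)"
    unfolding vf_bracket_def 1 2 by (rule ext) (simp add: right_diff_distrib)
qed

lemma V_lie: assumes SA: "smooth_atlas A" and m: "\<And>X Y. X \<in> vector_fields A \<Longrightarrow> Y \<in> vector_fields A \<Longrightarrow> m X Y \<in> vector_fields A"
  and "Z \<in> vector_fields A" "X \<in> vector_fields A" "Y \<in> vector_fields A"
  shows "lie_mult m Z X Y \<in> vector_fields A"
  unfolding lie_mult_def using assms by (simp add: V_diff V_bracket)



lemma dbl_zero: "Q = vf_add Q Q \<Longrightarrow> Q = (\<lambda>f p. 0)"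
  unfolding vf_add_def fun_eq_iff by (metis add_cancel_left_right)

definition mulF :: "'a vf \<Rightarrow> ('a vf \<Rightarrow> 'a vf \<Rightarrow> 'a vf) \<Rightarrow> 'a vf \<Rightarrow> 'a vf \<Rightarrow> 'a vf" where
  "mulF F m X Y = m (m X Y) F"

lemma vf_ext: "(\<And>f p. X f p = Y f p) \<Longrightarrow> X = Y" by (intro ext)
lemma pt: "X = Y \<Longrightarrow> X f p = Y f p" by simp

lemma br_anti: "vf_bracket X Y = vf_rscale (-1) (vf_bracket Y X)"
  by (rule vf_ext) (simp add: vf_bracket_def vf_rscale_def)
lemma br_self: "vf_bracket X X = vf_rscale 0 Y"
  by (rule vf_ext) (simp add: vf_bracket_def vf_rscale_def)
lemma rs_rs: "vf_rscale a (vf_rscale b X) = vf_rscale (a*b) X"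
  by (rule vf_ext) (simp add: vf_rscale_def)
lemma rs_1: "vf_rscale 1 X = X"
  by (rule vf_ext) (simp add: vf_rscale_def)
lemma zero_rs: "(\<lambda>f p. 0) = vf_rscale 0 X"
  by (rule vf_ext) (simp add: vf_rscale_def)

context
  fixes A :: "('a::topological_space set \<times> ('a \<Rightarrow> real^'n)) set"
    and mul :: "'a vf \<Rightarrow> 'a vf \<Rightarrow> 'a vf" and e E :: "'a vf"
  assumes FM: "F_manifold A mul e" and EI: "eventual_identity A mul e E"
begin

abbreviation "V \<equiv> vector_fields A"
abbreviation "Fi \<equiv> vf_inverse A mul e E"
abbreviation "pw k \<equiv> vf_ipow A mul e E k"
abbreviation "G \<equiv> vf_bracket e E"

lemma SA: "smooth_atlas A" using FM unfolding F_manifold_def by blast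
lemma mulV: "X \<in> V \<Longrightarrow> Y \<in> V \<Longrightarrow> mul X Y \<in> V" using FM unfolding F_manifold_def by blast
lemma comm: "X \<in> V \<Longrightarrow> Y \<in> V \<Longrightarrow> mul X Y = mul Y X" using FM unfolding F_manifold_def by blast
lemma assoc: "X \<in> V \<Longrightarrow> Y \<in> V \<Longrightarrow> Z \<in> V \<Longrightarrow> mul (mul X Y) Z = mul X (mul Y Z)"
  using FM unfolding F_manifold_def by blast
lemma distl: "X \<in> V \<Longrightarrow> Y \<in> V \<Longrightarrow> Z \<in> V \<Longrightarrow> mul (vf_add X Y) Z = vf_add (mul X Z) (mul Y Z)"
  using FM unfolding F_manifold_def by blast
lemma fsc: "g \<in> Cinf A \<Longrightarrow> X \<in> V \<Longrightarrow> Y \<in> V \<Longrightarrow> mul (vf_fscale g X) Y = vf_fscale g (mul X Y)"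
  using FM unfolding F_manifold_def by blast
lemma eV: "e \<in> V" using FM unfolding F_manifold_def by blast
lemma unitl: "X \<in> V \<Longrightarrow> mul e X = X" using FM unfolding F_manifold_def by blast
lemma lieF: "X \<in> V \<Longrightarrow> Y \<in> V \<Longrightarrow> Z \<in> V \<Longrightarrow> W \<in> V \<Longrightarrow>
        lie_mult mul (mul X Y) Z W = vf_add (mul X (lie_mult mul Y Z W)) (mul Y (lie_mult mul X Z W))"
  using FM unfolding F_manifold_def by blast

lemma EV: "E \<in> V" and FV: "Fi \<in> V" and EF: "mul E Fi = e"
proof -
  have "E \<in> V" "\<exists>F. F \<in> V \<and> mul E F = e" using EI unfolding eventual_identity_def vf_invertible_def by auto
  then show "E \<in> V" "Fi \<in> V" "mul E Fi = e" unfolding vf_inverse_def using someI_ex by (metis (mono_tags, lifting))+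
qed

lemma unitr: "X \<in> V \<Longrightarrow> mul X e = X" using comm[OF _ eV, of X] unitl by simp
lemma FE: "mul Fi E = e" using comm[OF FV EV] EF by simp

lemma rsc_l: "X \<in> V \<Longrightarrow> Y \<in> V \<Longrightarrow> mul (vf_rscale c X) Y = vf_rscale c (mul X Y)"
proof -
  assume XY: "X \<in> V" "Y \<in> V"
  have "vf_rscale c X = vf_fscale (\<lambda>_. c) X" "vf_rscale c (mul X Y) = vf_fscale (\<lambda>_. c) (mul X Y)"
    by (simp_all add: vf_rscale_def vf_fscale_def)
  thus ?thesis using fsc[OF Cinf_const XY] by simp
qed
lemma rsc_r: "X \<in> V \<Longrightarrow> Y \<in> V \<Longrightarrow> mul X (vf_rscale c Y) = vf_rscale c (mul X Y)"
  using comm[OF _ V_rscale[OF SA], of X Y c] rsc_l[of Y X c] comm[of X Y] by simp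
lemma add_r: "X \<in> V \<Longrightarrow> Y \<in> V \<Longrightarrow> Z \<in> V \<Longrightarrow> mul X (vf_add Y Z) = vf_add (mul X Y) (mul X Z)"
  using comm[OF _ V_add[OF SA], of X Y Z] distl[of Y Z X] comm[of X Y] comm[of X Z] by simp
lemma diff_r: "X \<in> V \<Longrightarrow> Y \<in> V \<Longrightarrow> Z \<in> V \<Longrightarrow> mul X (vf_diff Y Z) = vf_diff (mul X Y) (mul X Z)"
  by (simp add: diff_as_add add_r rsc_r V_rscale SA)

lemma funpowV: "X \<in> V \<Longrightarrow> (mul X ^^ n) e \<in> V"
  by (induction n) (auto simp: eV mulV)
lemma pwV: "pw k \<in> V"
  unfolding vf_ipow_def using funpowV EV FV by simp
lemma pos_pw: "pw (int n) = (mul E ^^ n) e" by (simp add: vf_ipow_def)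
lemma neg_pw: "pw (- int n) = (mul Fi ^^ n) e"
proof (cases n)
  case (Suc m)
  have "nat (int m + 1) = Suc m" by arith
  thus ?thesis using Suc by (simp add: vf_ipow_def)
qed (simp add: vf_ipow_def)
lemma pw0: "pw 0 = e" by (simp add: vf_ipow_def)
lemma pw1: "pw 1 = E" using pos_pw[of 1] unitr EV by simp
lemma pwm1: "pw (-1) = Fi" using neg_pw[of 1] unitr FV by simp

lemma pw_succ: "pw (k + 1) = mul (pw k) E"
proof (cases "k \<ge> 0")
  case True
  then obtain n where k: "k = int n" using nonneg_int_cases by blast
  have "pw (k+1) = pw (int (Suc n))" using k by (simp add: add.commute)
  also have "\<dots> = mul E (pw k)" using pos_pw[of "Suc n"] pos_pw[of n] k by simp
  finally show ?thesis using comm EV pwV by metis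
next
  case False
  define n where "n = nat (-k) - 1"
  have k: "k = - int (Suc n)" using False unfolding n_def by simp
  have k1: "pw (k+1) = (mul Fi ^^ n) e" using k neg_pw by simp
  have k2: "pw k = mul Fi ((mul Fi ^^ n) e)" using k neg_pw[of "Suc n"] by simp
  have QV: "(mul Fi ^^ n) e \<in> V" using funpowV FV by blast
  have "mul (mul Fi ((mul Fi ^^ n) e)) E = mul ((mul Fi ^^ n) e) (mul Fi E)"
    using QV FV EV by (metis assoc comm)
  also have "\<dots> = (mul Fi ^^ n) e" using FE unitr QV by simp
  finally show ?thesis using k1 k2 by simp
qed

lemma pw_pred: "pw (k - 1) = mul (pw k) Fi"
proof -
  have "pw k = mul (pw (k-1)) E" using pw_succ[of "k-1"] by simp
  hence "mul (pw k) Fi = mul (pw (k-1)) (mul E Fi)" using assoc pwV EV FV by simp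
  thus ?thesis using EF unitr pwV by simp
qed

lemma pw_add: "mul (pw a) (pw b) = pw (a + b)"
proof (induction b rule: int_induct[where k=0])
  case base thus ?case using pw0 unitr pwV by simp
next
  case (step1 i)
  have "mul (pw a) (pw (i+1)) = mul (mul (pw a) (pw i)) E" unfolding pw_succ[of i] using assoc[OF pwV pwV EV] by simp
  also have "\<dots> = pw (a + i + 1)" unfolding step1(2) pw_succ[of "a+i"] ..
  finally show ?case by (simp add: add.assoc)
next
  case (step2 i)
  have "mul (pw a) (pw (i-1)) = mul (mul (pw a) (pw i)) Fi" unfolding pw_pred[of i] using assoc[OF pwV pwV FV] by simp
  also have "\<dots> = pw (a + i - 1)" unfolding step2(2) pw_pred[of "a+i"] ..
  finally show ?case by (simp add: algebra_simps)
qed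

lemma H2: "X \<in> V \<Longrightarrow> mul (pw a) (mul (pw b) X) = mul (pw (a+b)) X"
proof -
  assume X: "X \<in> V"
  have "mul (mul (pw a) (pw b)) X = mul (pw a) (mul (pw b) X)" using assoc[OF pwV pwV X] .
  thus ?thesis unfolding pw_add by simp
qed
lemma H1: "X \<in> V \<Longrightarrow> mul (mul (pw a) X) (pw b) = mul (pw (a+b)) X"
proof -
  assume X: "X \<in> V"
  have "mul (mul (pw a) X) (pw b) = mul (pw a) (mul X (pw b))" using assoc[OF pwV X pwV] .
  also have "\<dots> = mul (pw a) (mul (pw b) X)" using comm[OF X pwV] by simp
  finally show ?thesis using H2[OF X] by simp
qed


lemma GV: "G \<in> V" using V_bracket[OF SA eV EV] .
lemma brV: "X \<in> V \<Longrightarrow> Y \<in> V \<Longrightarrow> vf_bracket X Y \<in> V" using V_bracket SA by blast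
lemma lieV: "Z \<in> V \<Longrightarrow> X \<in> V \<Longrightarrow> Y \<in> V \<Longrightarrow> lie_mult mul Z X Y \<in> V"
  by (rule V_lie[OF SA, where m=mul]) (simp_all add: mulV)

lemma Pe0: assumes X: "X \<in> V" and Y: "Y \<in> V" shows "lie_mult mul e X Y = (\<lambda>f p. 0)"
proof -
  have QV: "lie_mult mul e X Y \<in> V" using lieV[OF eV X Y] .
  have "lie_mult mul (mul e e) X Y = vf_add (mul e (lie_mult mul e X Y)) (mul e (lie_mult mul e X Y))"
    using lieF[OF eV eV X Y] .
  hence "lie_mult mul e X Y = vf_add (lie_mult mul e X Y) (lie_mult mul e X Y)" using unitl[OF eV] unitl[OF QV] by simp
  thus ?thesis by (rule dbl_zero)
qed

lemma K2: assumes Z: "Z \<in> V" and W: "W \<in> V" shows "lie_mult (mulF Fi mul) E Z W = (\<lambda>f p. 0)"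
proof -
  have eq: "mulF Fi mul = (\<lambda>X Y. mul (mul X Y) Fi)" by (intro ext) (simp add: mulF_def)
  have FM': "F_manifold A (mulF Fi mul) E" using EI unfolding eventual_identity_def eq by blast
  have mV: "\<And>X Y. X \<in> V \<Longrightarrow> Y \<in> V \<Longrightarrow> mulF Fi mul X Y \<in> V" using mulV FV by (simp add: mulF_def)
  have unit': "\<And>X. X \<in> V \<Longrightarrow> mulF Fi mul E X = X" using FM' unfolding F_manifold_def by blast
  have lie': "lie_mult (mulF Fi mul) (mulF Fi mul E E) Z W = vf_add (mulF Fi mul E (lie_mult (mulF Fi mul) E Z W)) (mulF Fi mul E (lie_mult (mulF Fi mul) E Z W))"
    using FM' EV Z W unfolding F_manifold_def by blast
  have QV: "lie_mult (mulF Fi mul) E Z W \<in> V" using V_lie[OF SA mV EV Z W] .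
  have "lie_mult (mulF Fi mul) E Z W = vf_add (lie_mult (mulF Fi mul) E Z W) (lie_mult (mulF Fi mul) E Z W)"
    using lie' unit'[OF EV] unit'[OF QV] by simp
  thus ?thesis by (rule dbl_zero)
qed

lemma PE: assumes X: "X \<in> V" and Y: "Y \<in> V" shows "lie_mult mul E X Y = mul (mul G X) Y"
proof -
  define W where "W = mul Y E"
  have WV: "W \<in> V" using mulV[OF Y EV] W_def by simp
  have WF: "mul W Fi = Y" unfolding W_def using assoc[OF Y EV FV] EF unitr[OF Y] by simp
  have BW: "vf_bracket E W \<in> V" using brV[OF EV WV] .
  have Be: "vf_bracket E e \<in> V" using brV[OF EV eV] .
  have BX: "vf_bracket E X \<in> V" using brV[OF EV X] .
  have BY: "vf_bracket E Y \<in> V" using brV[OF EV Y] .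
  have eq1: "vf_diff (vf_diff (vf_bracket E Y) (mul (vf_bracket E e) Y)) (mul (vf_bracket E W) Fi) = (\<lambda>f p. 0)"
  proof -
    have "lie_mult (mulF Fi mul) E e W = (\<lambda>f p. 0)" using K2[OF eV WV] .
    moreover have "mulF Fi mul e W = Y" unfolding mulF_def using unitl[OF WV] WF by simp
    moreover have "mulF Fi mul (vf_bracket E e) W = mul (vf_bracket E e) Y" unfolding mulF_def using assoc[OF Be WV FV] WF by simp
    moreover have "mulF Fi mul e (vf_bracket E W) = mul (vf_bracket E W) Fi" unfolding mulF_def using unitl[OF BW] by simp
    ultimately show ?thesis unfolding lie_mult_def by simp
  qed
  have eq2: "vf_diff (vf_diff (vf_bracket E (mul X Y)) (mul (vf_bracket E X) Y)) (mul X (mul (vf_bracket E W) Fi)) = (\<lambda>f p. 0)"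
  proof -
    have "lie_mult (mulF Fi mul) E X W = (\<lambda>f p. 0)" using K2[OF X WV] .
    moreover have "mulF Fi mul X W = mul X Y" unfolding mulF_def using assoc[OF X WV FV] WF by simp
    moreover have "mulF Fi mul (vf_bracket E X) W = mul (vf_bracket E X) Y" unfolding mulF_def using assoc[OF BX WV FV] WF by simp
    moreover have "mulF Fi mul X (vf_bracket E W) = mul X (mul (vf_bracket E W) Fi)" unfolding mulF_def using assoc[OF X BW FV] by simp
    ultimately show ?thesis unfolding lie_mult_def by simp
  qed
  have c1: "mul (vf_bracket E W) Fi = vf_diff (vf_bracket E Y) (mul (vf_bracket E e) Y)"
  proof (rule vf_ext)
    fix f p show "mul (vf_bracket E W) Fi f p = vf_diff (vf_bracket E Y) (mul (vf_bracket E e) Y) f p"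
      using pt[OF eq1, of f p] by (simp add: vf_diff_def)
  qed
  have Ee: "vf_bracket E e = vf_rscale (-1) G" by (rule br_anti)
  have c3: "mul X (mul (vf_bracket E e) Y) = vf_rscale (-1) (mul (mul G X) Y)"
    unfolding Ee rsc_l[OF GV Y] rsc_r[OF X mulV[OF GV Y]] using assoc[OF GV X Y] assoc[OF X GV Y] comm[OF X GV] by simp
  have c2: "mul X (mul (vf_bracket E W) Fi) = vf_diff (mul X (vf_bracket E Y)) (vf_rscale (-1) (mul (mul G X) Y))"
    unfolding c1 diff_r[OF X BY mulV[OF Be Y]] c3 ..
  show ?thesis
  proof (rule vf_ext)
    fix f p show "lie_mult mul E X Y f p = mul (mul G X) Y f p"
      using pt[OF eq2, of f p] unfolding c2 by (simp add: vf_diff_def vf_rscale_def lie_mult_def)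
  qed
qed

lemma Ppow: assumes X: "X \<in> V" and Y: "Y \<in> V"
  shows "lie_mult mul (pw n) X Y = vf_rscale (of_int n) (mul (pw (n-1)) (mul (mul G X) Y))"
proof (induction n rule: int_induct[where k=0])
  case base show ?case using Pe0[OF X Y] pw0 by (simp add: zero_rs)
next
  case (step1 i)
  define R where "R = mul (mul G X) Y"
  have RV: "R \<in> V" unfolding R_def using mulV GV X Y by blast
  have "lie_mult mul (pw (i+1)) X Y = vf_add (mul (pw i) (lie_mult mul E X Y)) (mul E (lie_mult mul (pw i) X Y))"
    unfolding pw_succ using lieF[OF pwV EV X Y] .
  also have "\<dots> = vf_add (mul (pw i) R) (vf_rscale (of_int i) (mul (pw i) R))"
  proof -
    have "mul E (mul (pw (i-1)) R) = mul (pw i) R" using H2[OF RV, of 1 "i-1"] pw1 by simp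
    thus ?thesis unfolding step1(2) PE[OF X Y] R_def[symmetric] rsc_r[OF EV mulV[OF pwV RV]] by simp
  qed
  also have "\<dots> = vf_rscale (of_int (i+1)) (mul (pw (i+1-1)) R)"
    by (rule vf_ext) (simp add: vf_add_def vf_rscale_def algebra_simps)
  finally show ?case unfolding R_def .
next
  case (step2 i)
  define R where "R = mul (mul G X) Y"
  have RV: "R \<in> V" unfolding R_def using mulV GV X Y by blast
  define L where "L = lie_mult mul (pw (i-1)) X Y"
  have LV: "L \<in> V" unfolding L_def using lieV pwV X Y by blast
  have "lie_mult mul (pw i) X Y = vf_add (mul (pw (i-1)) (lie_mult mul E X Y)) (mul E L)"
    unfolding L_def using lieF[OF pwV EV X Y, of "i-1"] pw_succ[of "i-1"] by simp
  hence "vf_rscale (of_int i) (mul (pw (i - 1)) R) = vf_add (mul (pw (i-1)) R) (mul E L)"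
    unfolding step2(2) PE[OF X Y] R_def .
  hence EL: "mul E L = vf_rscale (of_int (i-1)) (mul (pw (i - 1)) R)"
  proof (intro vf_ext)
    fix f p assume h: "vf_rscale (of_int i) (mul (pw (i - 1)) R) = vf_add (mul (pw (i-1)) R) (mul E L)"
    show "mul E L f p = vf_rscale (of_int (i-1)) (mul (pw (i - 1)) R) f p"
      using pt[OF h, of f p] by (simp add: vf_add_def vf_rscale_def algebra_simps)
  qed
  have "L = mul Fi (mul E L)" using assoc[OF FV EV LV] FE unitl[OF LV] by simp
  also have "\<dots> = vf_rscale (of_int (i-1)) (mul (pw (-1 + (i-1))) R)"
    unfolding EL rsc_r[OF FV mulV[OF pwV RV]] using H2[OF RV, of "-1" "i-1"] pwm1 by simp
  finally show ?case unfolding L_def R_def by (simp add: algebra_simps)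
qed

lemma Lgen:
  assumes Z: "Z \<in> V" and H: "H \<in> V"
   and hP: "\<And>m. lie_mult mul Z (pw m) E = vf_rscale (of_int p) (mul (pw (m+r)) H)"
   and hq: "vf_bracket Z E = vf_rscale (of_int q) (mul (pw r) H)"
   and hb: "vf_bracket Z e = vf_rscale (of_int b) (mul (pw (r-1)) H)"
  shows "vf_bracket Z (pw m) = vf_rscale (of_int (b + m*(p+q))) (mul (pw (m+r-1)) H)"
proof (induction m rule: int_induct[where k=0])
  case base show ?case using hb pw0 by simp
next
  case (step1 i)
  have rec: "vf_bracket Z (pw (i+1)) = vf_add (vf_add (lie_mult mul Z (pw i) E) (mul (vf_bracket Z (pw i)) E)) (mul (pw i) (vf_bracket Z E))"
    unfolding pw_succ by (rule vf_ext) (simp add: lie_mult_def vf_add_def vf_diff_def)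
  have a: "mul (vf_bracket Z (pw i)) E = vf_rscale (of_int (b + i*(p+q))) (mul (pw (i+r)) H)"
    unfolding step1(2) rsc_l[OF mulV[OF pwV H] EV] using H1[OF H, of "i+r-1" 1] pw1 by simp
  have c: "mul (pw i) (vf_bracket Z E) = vf_rscale (of_int q) (mul (pw (i+r)) H)"
    unfolding hq rsc_r[OF pwV mulV[OF pwV H]] H2[OF H] ..
  show ?case unfolding rec a c hP
    by (rule vf_ext) (simp add: vf_add_def vf_rscale_def algebra_simps)
next
  case (step2 i)
  define B where "B = vf_bracket Z (pw (i-1))"
  have BV: "B \<in> V" unfolding B_def using brV Z pwV by blast
  have rec: "vf_bracket Z (pw i) = vf_add (vf_add (lie_mult mul Z (pw (i-1)) E) (mul B E)) (mul (pw (i-1)) (vf_bracket Z E))"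
    using pw_succ[of "i-1"] unfolding B_def by (intro vf_ext) (simp add: lie_mult_def vf_add_def vf_diff_def)
  have c: "mul (pw (i-1)) (vf_bracket Z E) = vf_rscale (of_int q) (mul (pw (i-1+r)) H)"
    unfolding hq rsc_r[OF pwV mulV[OF pwV H]] H2[OF H] ..
  have "vf_rscale (of_int (b + i*(p+q))) (mul (pw (i+r-1)) H) = vf_add (vf_add (vf_rscale (of_int p) (mul (pw (i-1+r)) H)) (mul B E)) (vf_rscale (of_int q) (mul (pw (i-1+r)) H))"
    using rec unfolding step2(2) c hP by simp
  hence "vf_rscale (of_int (b + i*(p+q))) (mul (pw (i-1+r)) H) = vf_add (vf_add (vf_rscale (of_int p) (mul (pw (i-1+r)) H)) (mul B E)) (vf_rscale (of_int q) (mul (pw (i-1+r)) H))"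
    by (simp add: algebra_simps)
  hence BE: "mul B E = vf_rscale (of_int (b + (i-1)*(p+q))) (mul (pw (i-1+r)) H)"
  proof (intro vf_ext)
    fix f pp assume h: "vf_rscale (of_int (b + i*(p+q))) (mul (pw (i-1+r)) H) = vf_add (vf_add (vf_rscale (of_int p) (mul (pw (i-1+r)) H)) (mul B E)) (vf_rscale (of_int q) (mul (pw (i-1+r)) H))"
    show "mul B E f pp = vf_rscale (of_int (b + (i-1)*(p+q))) (mul (pw (i-1+r)) H) f pp"
      using pt[OF h, of f pp] by (simp add: vf_add_def vf_rscale_def algebra_simps)
  qed
  have "B = mul (mul B E) Fi" using assoc[OF BV EV FV] EF unitr[OF BV] by simp
  also have "\<dots> = vf_rscale (of_int (b + (i-1)*(p+q))) (mul (pw (i-1+r + -1)) H)"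
    unfolding BE rsc_l[OF mulV[OF pwV H] FV] using H1[OF H, of "i-1+r" "-1"] pwm1 by simp
  finally show ?case unfolding B_def by (simp add: algebra_simps)
qed

lemma main: "vf_bracket (pw n) (pw m) = vf_rscale (of_int (m - n)) (mul (pw (m + n - 1)) G)"
proof -
  have Be: "vf_bracket e (pw m) = vf_rscale (of_int m) (mul (pw (m-1)) G)" for m
  proof -
    have "vf_bracket e (pw m) = vf_rscale (of_int (0 + m*(0+1))) (mul (pw (m+0-1)) G)"
    proof (rule Lgen[OF eV GV])
      show "lie_mult mul e (pw k) E = vf_rscale (of_int 0) (mul (pw (k+0)) G)" for k
        using Pe0[OF pwV EV] zero_rs by simp
      show "vf_bracket e E = vf_rscale (of_int 1) (mul (pw 0) G)" unfolding pw0 unitl[OF GV] by (rule vf_ext) (simp add: vf_rscale_def)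
      show "vf_bracket e e = vf_rscale (of_int 0) (mul (pw (0-1)) G)" using br_self by simp
    qed
    thus ?thesis by simp
  qed
  have BE: "vf_bracket E (pw m) = vf_rscale (of_int (m-1)) (mul (pw m) G)" for m
  proof -
    have "vf_bracket E (pw m) = vf_rscale (of_int (-1 + m*(1+0))) (mul (pw (m+1-1)) G)"
    proof (rule Lgen[OF EV GV])
      show "lie_mult mul E (pw k) E = vf_rscale (of_int 1) (mul (pw (k+1)) G)" for k
      proof -
        have "mul (mul G (pw k)) E = mul (pw (k+1)) G"
          using comm[OF GV pwV, of k] H1[OF GV, of k 1] pw1 by simp
        hence "lie_mult mul E (pw k) E = mul (pw (k+1)) G" using PE[OF pwV EV] by simp
        thus ?thesis by (intro vf_ext) (simp add: vf_rscale_def)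
      qed
      show "vf_bracket E E = vf_rscale (of_int 0) (mul (pw 1) G)" using br_self by simp
      show "vf_bracket E e = vf_rscale (of_int (-1)) (mul (pw (1-1)) G)" using br_anti[of E e] pw0 unitl[OF GV] by simp
    qed
    thus ?thesis by simp
  qed
  have "vf_bracket (pw n) (pw m) = vf_rscale (of_int (-n + m*(n+(1-n)))) (mul (pw (m+n-1)) G)"
  proof (rule Lgen[OF pwV GV])
    show "lie_mult mul (pw n) (pw k) E = vf_rscale (of_int n) (mul (pw (k+n)) G)" for k
    proof -
      have "mul (mul G (pw k)) E = mul (pw (k+1)) G"
        using comm[OF GV pwV, of k] H1[OF GV, of k 1] pw1 by simp
      hence "mul (pw (n-1)) (mul (mul G (pw k)) E) = mul (pw (k+n)) G"
        using H2[OF GV, of "n-1" "k+1"] by (simp add: algebra_simps)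
      thus ?thesis using Ppow[OF pwV EV, of n k] by simp
    qed
    show "vf_bracket (pw n) E = vf_rscale (of_int (1-n)) (mul (pw n) G)"
      unfolding br_anti[of "pw n" E] BE[of n] by (intro vf_ext) (simp add: vf_rscale_def algebra_simps)
    show "vf_bracket (pw n) e = vf_rscale (of_int (-n)) (mul (pw (n-1)) G)"
      unfolding br_anti[of "pw n" e] Be[of n] by (intro vf_ext) (simp add: vf_rscale_def algebra_simps)
  qed
  thus ?thesis by (simp add: algebra_simps)
qed

end

theorem mainTheorem6:
  fixes A :: "('a::{t2_space,second_countable_topology} set \<times> ('a \<Rightarrow> real^'n)) set"
    and mul :: "'a vf \<Rightarrow> 'a vf \<Rightarrow> 'a vf"
    and e E :: "'a vf"
    and m n :: int
  assumes "F_manifold A mul e"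
    and "eventual_identity A mul e E"
  shows "vf_bracket (vf_ipow A mul e E n) (vf_ipow A mul e E m) =
         vf_rscale (of_int (m - n))
           (mul (vf_ipow A mul e E (m + n - 1)) (vf_bracket e E))"
  by (rule main[OF assms])

end
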